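(* Let $(k,R,t)\in\mathbb{R}^3$ with $R>0$ and $t\neq 0$, put $c=\frac{1-t^2}{1+t^2}$, $s=\frac{2t}{1+t^2}$, and let $$F_1^h=Y^2-(Xs-Yc)^2+2ZW-W^2,\qquad F_2^h=\bigl(X^2-2kZW+(R^2+k^2)W^2\bigr)^2-4R^2W^2(X^2+Y^2).$$ Let $T\subset\mathbb{P}^3$ be the projective closure of the trisector $\{F_1^h(x,y,z,1)=F_2^h(x,y,z,1)=0\}\subset\mathbb{R}^3$. Then $T$ meets the plane at infinity $\{W=0\}$ in the unique point $p_\infty=[0:0:1:0]$. In the affine chart $Z=1$, the first nonzero homogeneous term of a local defining equation of $T$ at $p_\infty$ is $E(X,Y)^2$, where $$E(X,Y)=X^2-2kQ(X,Y),\qquad Q(X,Y)=\tfrac12\bigl(s^2X^2-2scXY-s^2Y^2\bigr).$$ The discriminant of the quadratic form $E$ is $\Delta_Q=4ks^2(k-1)$. Hence the asymptotic direction pattern degenerates (i.e. $E$ fails to factor into two distinct linear forms) exactly when $\Delta_Q=0$, that is, at $k=0$ and $k=1$.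
   Context: $F_1^h,F_2^h$ are the homogenizations ($x=X/W$, $y=Y/W$, $z=Z/W$) of the $L_1$–$L_2$ bisector $y^2-(xs-yc)^2+2z-1$ and the polynomialized $L_1$–circle bisector $(x^2-2kz+R^2+k^2)^2-4R^2(x^2+y^2)$, for $L_1$ the $x$-axis, $L_2$ the line through $(0,0,1)$ with direction $(c,s,0)$, and the circle of radius $R$ centered at $(0,0,k)$ in the plane $z=k$. The projective closure is the zero set of the saturated ideal $(\langle F_1^h,F_2^h\rangle : W^\infty)$. In the chart $Z=1$ with $p_\infty$ at the origin of $(X,Y,W)$, the equation $F_1^h(X,Y,1,W)=0$ has a unique local analytic solution $W=\omega(X,Y)$ with $\omega(0,0)=0$ (implicit function theorem, since $\partial_W F_1^h=2$ there), and the local defining equation is $F_2^h(X,Y,1,\omega(X,Y))=0$. *)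

theory Defs
  imports "HOL-Analysis.Analysis" "HOL-Library.Landau_Symbols"
begin

type_synonym pt4 = "real \<times> real \<times> real \<times> real"

definition coordW :: "pt4 \<Rightarrow> real" where
  "coordW p = snd (snd (snd p))"

text \<open>Real polynomial functions in X,Y,Z,W (over the infinite field R these
  are the same as polynomials).\<close>
inductive_set poly_fun4 :: "(pt4 \<Rightarrow> real) set" where
  pconst: "(\<lambda>p. a) \<in> poly_fun4"
| pX: "(\<lambda>p. fst p) \<in> poly_fun4"
| pY: "(\<lambda>p. fst (snd p)) \<in> poly_fun4"
| pZ: "(\<lambda>p. fst (snd (snd p))) \<in> poly_fun4"
| pW: "(\<lambda>p. snd (snd (snd p))) \<in> poly_fun4"
| padd: "f \<in> poly_fun4 \<Longrightarrow> g \<in> poly_fun4 \<Longrightarrow> (\<lambda>p. f p + g p) \<in> poly_fun4"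
| pmult: "f \<in> poly_fun4 \<Longrightarrow> g \<in> poly_fun4 \<Longrightarrow> (\<lambda>p. f p * g p) \<in> poly_fun4"

definition ideal_gen2 :: "(pt4 \<Rightarrow> real) \<Rightarrow> (pt4 \<Rightarrow> real) \<Rightarrow> (pt4 \<Rightarrow> real) set" where
  "ideal_gen2 F G = {(\<lambda>p. A p * F p + B p * G p) | A B. A \<in> poly_fun4 \<and> B \<in> poly_fun4}"

definition saturation_W :: "(pt4 \<Rightarrow> real) set \<Rightarrow> (pt4 \<Rightarrow> real) set" where
  "saturation_W I = {H \<in> poly_fun4. \<exists>n::nat. (\<lambda>p. coordW p ^ n * H p) \<in> I}"

text \<open>Projective zero set, as the set of nonzero homogeneous coordinate vectors.\<close>
definition proj_zero_set :: "(pt4 \<Rightarrow> real) set \<Rightarrow> pt4 set" where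
  "proj_zero_set S = {p. p \<noteq> (0,0,0,0) \<and> (\<forall>H\<in>S. H p = 0)}"

definition F1h :: "real \<Rightarrow> real \<Rightarrow> pt4 \<Rightarrow> real" where
  "F1h s c = (\<lambda>(X,Y,Z,W). Y^2 - (X * s - Y * c)^2 + 2*Z*W - W^2)"

definition F2h :: "real \<Rightarrow> real \<Rightarrow> pt4 \<Rightarrow> real" where
  "F2h k R = (\<lambda>(X,Y,Z,W). (X^2 - 2*k*Z*W + (R^2+k^2)*W^2)^2 - 4*R^2*W^2*(X^2+Y^2))"

definition proj_closure :: "real \<Rightarrow> real \<Rightarrow> real \<Rightarrow> real \<Rightarrow> pt4 set" where
  "proj_closure k R s c = proj_zero_set (saturation_W (ideal_gen2 (F1h s c) (F2h k R)))"

definition Qform :: "real \<Rightarrow> real \<Rightarrow> real \<times> real \<Rightarrow> real" where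
  "Qform s c = (\<lambda>(X,Y). (s^2 * X^2 - 2 * s * c * X * Y - s^2 * Y^2) / 2)"

definition Eform :: "real \<Rightarrow> real \<Rightarrow> real \<Rightarrow> real \<times> real \<Rightarrow> real" where
  "Eform k s c = (\<lambda>(X,Y). X^2 - 2*k*Qform s c (X,Y))"

text \<open>Discriminant b^2 - 4ac of a binary quadratic form q = aX^2 + bXY + cY^2,
  with the coefficients read off from the values of q.\<close>
definition quad_disc :: "(real \<times> real \<Rightarrow> real) \<Rightarrow> real" where
  "quad_disc q = (let a = q (1,0); cc = q (0,1); b = q (1,1) - a - cc in b^2 - 4*a*cc)"

text \<open>q factors (over C) into two distinct (non-proportional) linear forms.\<close>
definition factors_distinct_linear :: "(real \<times> real \<Rightarrow> real) \<Rightarrow> bool" where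
  "factors_distinct_linear q \<longleftrightarrow>
     (\<exists>a b c d :: complex. (\<forall>x y. complex_of_real (q (x,y)) =
         (a * complex_of_real x + b * complex_of_real y) * (c * complex_of_real x + d * complex_of_real y))
       \<and> a * d - b * c \<noteq> 0)"

end

theory Submission
  imports Defs "HOL-Computational_Algebra.Polynomial"
begin


lemma pf_minus: "f \<in> poly_fun4 \<Longrightarrow> g \<in> poly_fun4 \<Longrightarrow> (\<lambda>p. f p - g p) \<in> poly_fun4"
proof -
  assume f: "f \<in> poly_fun4" and g: "g \<in> poly_fun4"
  have "(\<lambda>p. f p + (-1) * g p) \<in> poly_fun4"
    using poly_fun4.padd[OF f poly_fun4.pmult[OF poly_fun4.pconst[of "-1"] g]] by simp
  then show ?thesis by simp
qed

lemma pf_power: "f \<in> poly_fun4 \<Longrightarrow> (\<lambda>p. f p ^ n) \<in> poly_fun4"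
proof (induction n)
  case 0 then show ?case using poly_fun4.pconst[of 1] by simp
next
  case (Suc n)
  then show ?case using poly_fun4.pmult[OF Suc.prems Suc.IH] by simp
qed

lemmas pf_intros = poly_fun4.pconst poly_fun4.pX poly_fun4.pY poly_fun4.pZ poly_fun4.pW
  poly_fun4.padd poly_fun4.pmult pf_minus pf_power

type_synonym cpt4 = "complex \<times> complex \<times> complex \<times> complex"

inductive_set cpoly4 :: "(cpt4 \<Rightarrow> complex) set" where
  cconst: "(\<lambda>p. a) \<in> cpoly4"
| cX: "(\<lambda>p. fst p) \<in> cpoly4"
| cY: "(\<lambda>p. fst (snd p)) \<in> cpoly4"
| cZ: "(\<lambda>p. fst (snd (snd p))) \<in> cpoly4"
| cW: "(\<lambda>p. snd (snd (snd p))) \<in> cpoly4"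
| cadd: "f \<in> cpoly4 \<Longrightarrow> g \<in> cpoly4 \<Longrightarrow> (\<lambda>p. f p + g p) \<in> cpoly4"
| cmult: "f \<in> cpoly4 \<Longrightarrow> g \<in> cpoly4 \<Longrightarrow> (\<lambda>p. f p * g p) \<in> cpoly4"

lemma cp_minus: "f \<in> cpoly4 \<Longrightarrow> g \<in> cpoly4 \<Longrightarrow> (\<lambda>p. f p - g p) \<in> cpoly4"
proof -
  assume f: "f \<in> cpoly4" and g: "g \<in> cpoly4"
  have "(\<lambda>p. f p + (-1) * g p) \<in> cpoly4"
    using cpoly4.cadd[OF f cpoly4.cmult[OF cpoly4.cconst[of "-1"] g]] by simp
  then show ?thesis by simp
qed

lemma cp_power: "f \<in> cpoly4 \<Longrightarrow> (\<lambda>p. f p ^ n) \<in> cpoly4"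
proof (induction n)
  case 0 then show ?case using cpoly4.cconst[of 1] by simp
next
  case (Suc n)
  then show ?case using cpoly4.cmult[OF Suc.prems Suc.IH] by simp
qed

lemmas cp_intros = cpoly4.cconst cpoly4.cX cpoly4.cY cpoly4.cZ cpoly4.cW
  cpoly4.cadd cpoly4.cmult cp_minus cp_power

definition cmap :: "pt4 \<Rightarrow> cpt4" where
  "cmap p = (of_real (fst p), of_real (fst (snd p)), of_real (fst (snd (snd p))), of_real (snd (snd (snd p))))"

lemma pf_ext: "f \<in> poly_fun4 \<Longrightarrow> \<exists>g\<in>cpoly4. \<forall>p. g (cmap p) = complex_of_real (f p)"
proof (induction rule: poly_fun4.induct)
  case (pconst a) then show ?case by (intro bexI[of _ "\<lambda>p. of_real a"] cp_intros) auto
next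
  case pX then show ?case by (intro bexI[of _ "\<lambda>p. fst p"] cp_intros) (auto simp: cmap_def)
next
  case pY then show ?case by (intro bexI[of _ "\<lambda>p. fst (snd p)"] cp_intros) (auto simp: cmap_def)
next
  case pZ then show ?case by (intro bexI[of _ "\<lambda>p. fst (snd (snd p))"] cp_intros) (auto simp: cmap_def)
next
  case pW then show ?case by (intro bexI[of _ "\<lambda>p. snd (snd (snd p))"] cp_intros) (auto simp: cmap_def)
next
  case (padd f g)
  then obtain f' g' where "f' \<in> cpoly4" "g' \<in> cpoly4" "\<forall>p. f' (cmap p) = complex_of_real (f p)"
    "\<forall>p. g' (cmap p) = complex_of_real (g p)" by blast
  then show ?case by (intro bexI[of _ "\<lambda>p. f' p + g' p"] cp_intros) auto
next
  case (pmult f g)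
  then obtain f' g' where "f' \<in> cpoly4" "g' \<in> cpoly4" "\<forall>p. f' (cmap p) = complex_of_real (f p)"
    "\<forall>p. g' (cmap p) = complex_of_real (g p)" by blast
  then show ?case by (intro bexI[of _ "\<lambda>p. f' p * g' p"] cp_intros) auto
qed

lemma cp_cont: "g \<in> cpoly4 \<Longrightarrow> continuous_on UNIV g"
  by (induction rule: cpoly4.induct) (auto intro!: continuous_intros)

definition cline :: "cpt4 \<Rightarrow> cpt4 \<Rightarrow> complex \<Rightarrow> cpt4" where
  "cline a v u = (fst a + u * fst v, fst (snd a) + u * fst (snd v),
     fst (snd (snd a)) + u * fst (snd (snd v)), snd (snd (snd a)) + u * snd (snd (snd v)))"

lemma cp_line: "g \<in> cpoly4 \<Longrightarrow> \<exists>P. \<forall>u. g (cline a v u) = poly P u"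
proof (induction rule: cpoly4.induct)
  case (cconst a) then show ?case by (intro exI[of _ "[:a:]"]) auto
next
  case cX then show ?case by (intro exI[of _ "[:fst a, fst v:]"]) (auto simp: cline_def)
next
  case cY then show ?case by (intro exI[of _ "[:fst (snd a), fst (snd v):]"]) (auto simp: cline_def)
next
  case cZ then show ?case by (intro exI[of _ "[:fst (snd (snd a)), fst (snd (snd v)):]"]) (auto simp: cline_def)
next
  case cW then show ?case by (intro exI[of _ "[:snd (snd (snd a)), snd (snd (snd v)):]"]) (auto simp: cline_def)
next
  case (cadd f g)
  then obtain P Q where "\<forall>u. f (cline a v u) = poly P u" "\<forall>u. g (cline a v u) = poly Q u" by blast
  then show ?case by (intro exI[of _ "P + Q"]) auto
next
  case (cmult f g)
  then obtain P Q where "\<forall>u. f (cline a v u) = poly P u" "\<forall>u. g (cline a v u) = poly Q u" by blast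
  then show ?case by (intro exI[of _ "P * Q"]) auto
qed

lemma poly_real_zero:
  assumes "\<forall>x::real. poly P (complex_of_real x) = 0"
  shows "poly P z = 0"
proof (rule ccontr)
  assume "poly P z \<noteq> 0"
  then have "P \<noteq> 0" by auto
  then have "finite {z. poly P z = 0}" by (rule poly_roots_finite)
  moreover have "range complex_of_real \<subseteq> {z. poly P z = 0}" using assms by auto
  ultimately have "finite (range complex_of_real)" by (rule finite_subset[rotated])
  moreover have "inj complex_of_real" by (auto intro: injI)
  ultimately have "finite (UNIV :: real set)" using finite_imageD by blast
  then show False using infinite_UNIV_char_0 by blast
qed

lemma line_zero:
  assumes "g \<in> cpoly4" "\<forall>x::real. g (cline a v (of_real x)) = 0"
  shows "g (cline a v u) = 0"
proof -
  obtain P where P: "\<forall>u. g (cline a v u) = poly P u" using cp_line[OF assms(1)] by blast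
  show ?thesis using P assms(2) poly_real_zero[of P u] by auto
qed

lemma cp_vanish:
  assumes g: "g \<in> cpoly4" and z: "\<forall>p. g (cmap p) = 0"
  shows "g w = 0"
proof -
  obtain w1 w2 w3 w4 where w: "w = (w1, w2, w3, w4)" by (cases w) auto
  have s1: "g (u, of_real x2, of_real x3, of_real x4) = 0" for u x2 x3 x4
  proof -
    have "g (cline (0, of_real x2, of_real x3, of_real x4) (1,0,0,0) u) = 0"
      by (rule line_zero[OF g]) (use z in \<open>auto simp: cline_def cmap_def\<close>)
    then show ?thesis by (simp add: cline_def)
  qed
  have s2: "g (u1, u, of_real x3, of_real x4) = 0" for u1 u x3 x4
  proof -
    have "g (cline (u1, 0, of_real x3, of_real x4) (0,1,0,0) u) = 0"
      by (rule line_zero[OF g]) (use s1 in \<open>auto simp: cline_def\<close>)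
    then show ?thesis by (simp add: cline_def)
  qed
  have s3: "g (u1, u2, u, of_real x4) = 0" for u1 u2 u x4
  proof -
    have "g (cline (u1, u2, 0, of_real x4) (0,0,1,0) u) = 0"
      by (rule line_zero[OF g]) (use s2 in \<open>auto simp: cline_def\<close>)
    then show ?thesis by (simp add: cline_def)
  qed
  have s4: "g (u1, u2, u3, u) = 0" for u1 u2 u3 u
  proof -
    have "g (cline (u1, u2, u3, 0) (0,0,0,1) u) = 0"
      by (rule line_zero[OF g]) (use s3 in \<open>auto simp: cline_def\<close>)
    then show ?thesis by (simp add: cline_def)
  qed
  show ?thesis using s4 w by simp
qed



definition cF1 :: "complex \<Rightarrow> complex \<Rightarrow> cpt4 \<Rightarrow> complex" where
  "cF1 S C = (\<lambda>z. fst (snd z)^2 - (fst z * S - fst (snd z) * C)^2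
      + 2 * fst (snd (snd z)) * snd (snd (snd z)) - snd (snd (snd z))^2)"

definition cF2 :: "complex \<Rightarrow> complex \<Rightarrow> cpt4 \<Rightarrow> complex" where
  "cF2 K R = (\<lambda>z. (fst z^2 - 2 * K * fst (snd (snd z)) * snd (snd (snd z))
      + (R^2 + K^2) * snd (snd (snd z))^2)^2
      - 4 * R^2 * snd (snd (snd z))^2 * (fst z^2 + fst (snd z)^2))"

lemma curve_alg:
  fixes S C K R \<sigma> \<tau> \<mu> p q G :: complex
  assumes h\<sigma>: "\<sigma> * (\<tau>^2 - G) = 2 * \<tau>"
    and hG: "G = q^2 - (p * S - q * C)^2"
    and hpq: "p^2 + q^2 = \<mu>^2"
    and hF: "p^2 + K * G + (R^2 + K^2 - K) * \<tau>^2 - 2 * R * \<mu> * \<tau> = 0"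
  shows "cF1 S C (\<sigma> * p, \<sigma> * q, 1, \<sigma> * \<tau>) = 0" "cF2 K R (\<sigma> * p, \<sigma> * q, 1, \<sigma> * \<tau>) = 0"
proof -
  have "cF1 S C (\<sigma> * p, \<sigma> * q, 1, \<sigma> * \<tau>) = \<sigma> * (\<sigma> * G - \<sigma> * \<tau>^2 + 2 * \<tau>)"
    unfolding cF1_def hG by (simp add: power2_eq_square algebra_simps)
  also have "\<sigma> * G - \<sigma> * \<tau>^2 + 2 * \<tau> = 0" using h\<sigma> by (simp add: algebra_simps)
  finally show "cF1 S C (\<sigma> * p, \<sigma> * q, 1, \<sigma> * \<tau>) = 0" by simp
  have P: "(\<sigma>*p)^2 - 2 * K * 1 * (\<sigma>*\<tau>) + (R^2 + K^2) * (\<sigma>*\<tau>)^2 = 2 * R * (\<sigma>*\<tau>) * (\<sigma> * \<mu>)"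
  proof -
    have "2 * K * (\<sigma>*\<tau>) = K * \<sigma> * (2 * \<tau>)" by simp
    also have "\<dots> = K * \<sigma> * (\<sigma> * (\<tau>^2 - G))" using h\<sigma> by simp
    finally have e: "2 * K * (\<sigma>*\<tau>) = K * \<sigma> * (\<sigma> * (\<tau>^2 - G))" .
    have "(\<sigma>*p)^2 - 2 * K * 1 * (\<sigma>*\<tau>) + (R^2 + K^2) * (\<sigma>*\<tau>)^2
        = \<sigma>^2 * (p^2 + K * G + (R^2 + K^2 - K) * \<tau>^2)"
      using e by (simp add: power2_eq_square algebra_simps)
    also have "\<dots> = \<sigma>^2 * (2 * R * \<mu> * \<tau>)" using hF by (simp add: algebra_simps)
    finally show ?thesis by (simp add: power2_eq_square algebra_simps)
  qed
  have Q: "(\<sigma>*p)^2 + (\<sigma>*q)^2 = \<sigma>^2 * \<mu>^2" using hpq by (simp add: power_mult_distrib algebra_simps flip: distrib_left)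
  show "cF2 K R (\<sigma> * p, \<sigma> * q, 1, \<sigma> * \<tau>) = 0"
    unfolding cF2_def using P Q by (simp add: power2_eq_square algebra_simps)
qed



definition pp :: "complex \<Rightarrow> complex" where "pp \<mu> = (\<mu>^2 + 1) / 2"
definition qq :: "complex \<Rightarrow> complex" where "qq \<mu> = - \<i> * (\<mu>^2 - 1) / 2"
definition GG :: "complex \<Rightarrow> complex \<Rightarrow> complex \<Rightarrow> complex" where
  "GG S C \<mu> = qq \<mu>^2 - (pp \<mu> * S - qq \<mu> * C)^2"
definition ee :: "complex \<Rightarrow> complex \<Rightarrow> complex \<Rightarrow> complex \<Rightarrow> complex" where
  "ee S C K \<mu> = pp \<mu>^2 + K * GG S C \<mu>"

lemma pq_sum: "pp \<mu>^2 + qq \<mu>^2 = \<mu>^2"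
  unfolding pp_def qq_def by (simp add: power2_eq_square field_simps)

lemma ee_expand:
  assumes "S^2 + C^2 = 1"
  shows "ee S C K \<mu> = ((1 - 2*K*S^2)/4 - \<i>*K*S*C/2) * \<mu>^4 + \<mu>^2/2 + ((1 - 2*K*S^2)/4 + \<i>*K*S*C/2)"
proof -
  have C2: "C^2 = 1 - S^2" using assms by (simp add: algebra_simps)
  have "GG S C \<mu> = (1 - C^2) * qq \<mu>^2 + 2*S*C*pp \<mu> * qq \<mu> - S^2 * pp \<mu>^2"
    unfolding GG_def by (simp add: power2_eq_square algebra_simps)
  also have "\<dots> = S^2 * qq \<mu>^2 + 2*S*C*pp \<mu> * qq \<mu> - S^2 * pp \<mu>^2" using C2 by simp
  finally have G: "GG S C \<mu> = S^2 * qq \<mu>^2 + 2*S*C*pp \<mu> * qq \<mu> - S^2 * pp \<mu>^2" .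
  show ?thesis unfolding ee_def G unfolding pp_def qq_def
    by (simp add: power2_eq_square field_simps power4_eq_xxxx)
qed



lemma GG0_ne:
  assumes "S \<noteq> 0" "S^2 + C^2 = 1" "ee S C K \<mu>0 = 0"
  shows "GG S C \<mu>0 \<noteq> 0"
proof
  assume G: "GG S C \<mu>0 = 0"
  then have "pp \<mu>0^2 = 0" using assms(3) by (simp add: ee_def)
  then have p0: "pp \<mu>0 = 0" by simp
  then have "\<mu>0^2 + 1 = 0" unfolding pp_def by simp
  then have m: "\<mu>0^2 = -1" by (simp add: eq_neg_iff_add_eq_0)
  have q0: "qq \<mu>0 = \<i>" unfolding qq_def m by simp
  have "GG S C \<mu>0 = -1 + C^2" unfolding GG_def p0 q0 by (simp add: power2_eq_square algebra_simps)
  also have "\<dots> = -(S^2)" using assms(2) by (simp add: algebra_simps)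
  finally show False using G assms(1) by simp
qed

lemma common:
  fixes S C K Rc :: complex and \<mu> \<tau> :: "nat \<Rightarrow> complex"
  assumes S: "S \<noteq> 0" "S^2 + C^2 = 1" and lm: "\<mu> \<longlonglongrightarrow> \<mu>0" and lt: "\<tau> \<longlonglongrightarrow> 0"
    and e0: "ee S C K \<mu>0 = 0"
    and ev: "\<forall>\<^sub>F n in sequentially. ee S C K (\<mu> n) + (Rc^2 + K^2 - K) * \<tau> n^2 - 2*Rc*\<mu> n*\<tau> n = 0 \<and> \<tau> n \<noteq> 0"
  shows "\<exists>X Y W :: nat \<Rightarrow> complex. X \<longlonglongrightarrow> 0 \<and> Y \<longlonglongrightarrow> 0 \<and> W \<longlonglongrightarrow> 0 \<and>
    (\<forall>\<^sub>F n in sequentially. cF1 S C (X n, Y n, 1, W n) = 0 \<and> cF2 K Rc (X n, Y n, 1, W n) = 0 \<and> W n \<noteq> 0)"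
proof -
  define G0 where "G0 = GG S C \<mu>0"
  have G0: "G0 \<noteq> 0" unfolding G0_def by (rule GG0_ne[OF S e0])
  have Gt: "(\<lambda>n. GG S C (\<mu> n)) \<longlonglongrightarrow> G0"
    unfolding G0_def GG_def pp_def qq_def by (intro tendsto_intros lm) simp_all
  define D where "D n = \<tau> n^2 - GG S C (\<mu> n)" for n
  have Dt: "D \<longlonglongrightarrow> 0^2 - G0" unfolding D_def by (intro tendsto_intros lt Gt)
  have Dne: "\<forall>\<^sub>F n in sequentially. D n \<noteq> 0"
    by (rule tendsto_imp_eventually_ne[OF Dt]) (use G0 in simp)
  define \<sigma> where "\<sigma> n = 2 * \<tau> n / D n" for n
  have \<sigma>t: "\<sigma> \<longlonglongrightarrow> 2 * 0 / (0^2 - G0)" unfolding \<sigma>_def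
    by (intro tendsto_intros lt Dt) (use G0 in simp)
  have pt: "(\<lambda>n. pp (\<mu> n)) \<longlonglongrightarrow> pp \<mu>0" unfolding pp_def by (intro tendsto_intros lm) simp_all
  have qt: "(\<lambda>n. qq (\<mu> n)) \<longlonglongrightarrow> qq \<mu>0" unfolding qq_def by (intro tendsto_intros lm) simp_all
  have X: "(\<lambda>n. \<sigma> n * pp (\<mu> n)) \<longlonglongrightarrow> 0" using tendsto_mult[OF \<sigma>t pt] by simp
  have Y: "(\<lambda>n. \<sigma> n * qq (\<mu> n)) \<longlonglongrightarrow> 0" using tendsto_mult[OF \<sigma>t qt] by simp
  have W: "(\<lambda>n. \<sigma> n * \<tau> n) \<longlonglongrightarrow> 0" using tendsto_mult[OF \<sigma>t lt] by simp
  have E: "\<forall>\<^sub>F n in sequentially. cF1 S C (\<sigma> n * pp (\<mu> n), \<sigma> n * qq (\<mu> n), 1, \<sigma> n * \<tau> n) = 0 \<and>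
      cF2 K Rc (\<sigma> n * pp (\<mu> n), \<sigma> n * qq (\<mu> n), 1, \<sigma> n * \<tau> n) = 0 \<and> \<sigma> n * \<tau> n \<noteq> 0"
    using ev Dne
  proof eventually_elim
    case (elim n)
    have h\<sigma>: "\<sigma> n * (\<tau> n^2 - GG S C (\<mu> n)) = 2 * \<tau> n"
      using elim(2) unfolding \<sigma>_def D_def by simp
    have hF: "pp (\<mu> n)^2 + K * GG S C (\<mu> n) + (Rc^2 + K^2 - K) * \<tau> n^2 - 2 * Rc * \<mu> n * \<tau> n = 0"
      using elim(1) unfolding ee_def by simp
    have "\<sigma> n \<noteq> 0" using elim unfolding \<sigma>_def by simp
    then show ?case
      using curve_alg[OF h\<sigma> GG_def pq_sum hF] elim(1) by simp
  qed
  show ?thesis using X Y W E by blast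
qed



lemma branch_bound:
  fixes a r :: complex
  shows "cmod a \<le> cmod (a + (if cmod (a + r) \<ge> cmod (a - r) then r else - r))"
proof -
  have "2 * cmod a = cmod ((a + r) + (a - r))" by (simp add: norm_mult[symmetric])
  also have "\<dots> \<le> cmod (a + r) + cmod (a - r)" by (rule norm_triangle_ineq)
  finally show ?thesis by auto
qed

lemma curve_points:
  fixes s c k R :: real
  assumes s0: "s \<noteq> 0" and sc: "s^2 + c^2 = 1" and R0: "R > 0"
  shows "\<exists>X Y W :: nat \<Rightarrow> complex. X \<longlonglongrightarrow> 0 \<and> Y \<longlonglongrightarrow> 0 \<and> W \<longlonglongrightarrow> 0 \<and>
    (\<forall>\<^sub>F n in sequentially. cF1 (of_real s) (of_real c) (X n, Y n, 1, W n) = 0 \<and>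
       cF2 (of_real k) (of_real R) (X n, Y n, 1, W n) = 0 \<and> W n \<noteq> 0)"
proof -
  define S where "S = complex_of_real s"
  define C where "C = complex_of_real c"
  define K where "K = complex_of_real k"
  define Rc where "Rc = complex_of_real R"
  have S0: "S \<noteq> 0" using s0 S_def by simp
  have SC: "S^2 + C^2 = 1" unfolding S_def C_def using sc by (metis of_real_1 of_real_add of_real_power)
  define A where "A = (1 - 2*K*S^2)/4 - \<i>*K*S*C/2"
  define B where "B = (1 - 2*K*S^2)/4 + \<i>*K*S*C/2"
  define C0 where "C0 = Rc^2 + K^2 - K"
  have eeAB: "ee S C K \<mu> = A * \<mu>^4 + \<mu>^2/2 + B" for \<mu>
    unfolding A_def B_def using ee_expand[OF SC] by simp
  have AB: "A = 0 \<longleftrightarrow> B = 0"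
    unfolding A_def B_def S_def C_def K_def by (simp add: complex_eq_iff)
  define \<delta> :: "nat \<Rightarrow> complex" where "\<delta> n = complex_of_real (inverse (real (Suc n)))" for n
  have \<delta>t: "\<delta> \<longlonglongrightarrow> 0" unfolding \<delta>_def
    using tendsto_of_real[OF LIMSEQ_inverse_real_of_nat, where 'a=complex] by simp
  have \<delta>0: "\<delta> n \<noteq> 0" for n unfolding \<delta>_def of_real_eq_0_iff by simp
  have \<delta>inj: "inj \<delta>" unfolding \<delta>_def by (auto intro!: injI)
  show ?thesis
  proof (cases "A = 0")
    case True
    then have B0: "B = 0" using AB by simp
    define \<kappa> where "\<kappa> = 2 * Rc + csqrt (4 * Rc^2 - 2 * C0)"
    have \<kappa>: "\<kappa>^2/2 - 2*Rc*\<kappa> + C0 = 0"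
    proof -
      define q where "q = csqrt (4 * Rc^2 - 2 * C0)"
      have q2: "q^2 = 4 * Rc^2 - 2 * C0" unfolding q_def by simp
      have "(2*Rc+q)^2/2 - 2*Rc*(2*Rc+q) + C0 = q^2/2 - 2*Rc^2 + C0"
        by (simp add: power2_eq_square field_simps)
      also have "\<dots> = 0" unfolding q2 by (simp add: field_simps)
      finally show ?thesis unfolding \<kappa>_def q_def[symmetric] .
    qed
    define \<mu> where "\<mu> n = \<kappa> * \<delta> n" for n
    have \<mu>t: "\<mu> \<longlonglongrightarrow> 0" unfolding \<mu>_def using tendsto_mult[OF tendsto_const \<delta>t, of \<kappa>] by simp
    have e0: "ee S C K 0 = 0" using eeAB B0 by simp
    have ev: "\<forall>\<^sub>F n in sequentially. ee S C K (\<mu> n) + (Rc^2 + K^2 - K) * \<delta> n^2 - 2*Rc*\<mu> n*\<delta> n = 0 \<and> \<delta> n \<noteq> 0"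
    proof (rule always_eventually, intro allI conjI)
      fix n
      have "ee S C K (\<mu> n) + (Rc^2 + K^2 - K) * \<delta> n^2 - 2*Rc*\<mu> n*\<delta> n
          = \<delta> n^2 * (\<kappa>^2/2 - 2*Rc*\<kappa> + C0)"
        unfolding eeAB True B0 \<mu>_def C0_def by (simp add: power2_eq_square algebra_simps)
      then show "ee S C K (\<mu> n) + (Rc^2 + K^2 - K) * \<delta> n^2 - 2*Rc*\<mu> n*\<delta> n = 0" using \<kappa> by simp
      show "\<delta> n \<noteq> 0" by (rule \<delta>0)
    qed
    show ?thesis using common[OF S0 SC \<mu>t \<delta>t e0 ev] unfolding S_def C_def K_def Rc_def .
  next
    case False
    then have B0: "B \<noteq> 0" using AB by simp
    define d where "d = csqrt (1/4 - 4*A*B)"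
    define \<nu> where "\<nu> = (-1/2 + d) / (2*A)"
    have \<nu>: "A * \<nu>^2 + \<nu>/2 + B = 0"
    proof -
      have d2: "d^2 = 1/4 - 4*A*B" unfolding d_def by simp
      have "A * \<nu>^2 + \<nu>/2 + B = (d^2 - 1/4 + 4*A*B) / (4*A)"
        unfolding \<nu>_def using False by (simp add: field_simps power2_eq_square)
      then show ?thesis using d2 by simp
    qed
    have \<nu>0: "\<nu> \<noteq> 0" using \<nu> B0 by auto
    define \<mu>0 where "\<mu>0 = csqrt \<nu>"
    have \<mu>02: "\<mu>0^2 = \<nu>" unfolding \<mu>0_def by simp
    have \<mu>00: "\<mu>0 \<noteq> 0" using \<mu>02 \<nu>0 by auto
    have e0: "ee S C K \<mu>0 = 0"
    proof -
      have "\<mu>0^4 = \<nu>^2" using \<mu>02 by (metis power_mult numeral_Bit0 numeral_One mult_2)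
      then show ?thesis using \<nu> eeAB[of \<mu>0] \<mu>02 by simp
    qed
    define \<mu> where "\<mu> n = \<mu>0 + \<delta> n" for n
    have \<mu>t: "\<mu> \<longlonglongrightarrow> \<mu>0" unfolding \<mu>_def using tendsto_add[OF tendsto_const \<delta>t, of \<mu>0] by simp
    define Pe where "Pe = [:B, 0, 1/2, 0, A:]"
    have Pe: "poly Pe z = ee S C K z" for z
      unfolding Pe_def eeAB by (simp add: algebra_simps power2_eq_square power4_eq_xxxx)
    have "Pe \<noteq> 0" unfolding Pe_def by simp
    then have fin: "finite {z. poly Pe z = 0}" by (rule poly_roots_finite)
    have "inj \<mu>" using \<delta>inj unfolding \<mu>_def inj_def by simp
    then have "finite (\<mu> -` {z. poly Pe z = 0})" by (rule finite_vimageI[OF fin])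
    then have ev1: "\<forall>\<^sub>F n in sequentially. ee S C K (\<mu> n) \<noteq> 0"
      unfolding cofinite_eq_sequentially[symmetric] eventually_cofinite by (simp add: Pe vimage_def)
    have nt: "(\<lambda>n. cmod (\<mu> n)) \<longlonglongrightarrow> cmod \<mu>0" by (intro tendsto_intros \<mu>t)
    have ev2: "\<forall>\<^sub>F n in sequentially. cmod (\<mu> n) > cmod \<mu>0 / 2"
      by (rule order_tendstoD(1)[OF nt]) (use \<mu>00 in simp)
    define e where "e n = ee S C K (\<mu> n)" for n
    have et: "e \<longlonglongrightarrow> 0"
    proof -
      have "e \<longlonglongrightarrow> ee S C K \<mu>0" unfolding e_def eeAB by (intro tendsto_intros \<mu>t) simp_all
      then show ?thesis using e0 by simp
    qed
    define r where "r n = csqrt (Rc^2 * \<mu> n^2 - C0 * e n)" for n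
    define r' where "r' n = (if cmod (Rc * \<mu> n + r n) \<ge> cmod (Rc * \<mu> n - r n) then r n else - r n)" for n
    define dd where "dd n = Rc * \<mu> n + r' n" for n
    define \<tau> where "\<tau> n = e n / dd n" for n
    have r'2: "r' n ^ 2 = Rc^2 * \<mu> n^2 - C0 * e n" for n unfolding r'_def r_def by simp
    have ddb: "R * cmod (\<mu> n) \<le> cmod (dd n)" for n
    proof -
      have "cmod (Rc * \<mu> n) = R * cmod (\<mu> n)" unfolding Rc_def using R0 by (simp add: norm_mult)
      then show ?thesis unfolding dd_def r'_def using branch_bound[of "Rc * \<mu> n" "r n"] by simp
    qed
    have \<tau>t: "\<tau> \<longlonglongrightarrow> 0"
    proof (rule Lim_null_comparison)
      show "\<forall>\<^sub>F n in sequentially. norm (\<tau> n) \<le> cmod (e n) / (R * (cmod \<mu>0 / 2))"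
        using ev2
      proof eventually_elim
        case (elim n)
        have p: "0 < R * (cmod \<mu>0 / 2)" using R0 \<mu>00 by simp
        have le: "R * (cmod \<mu>0 / 2) \<le> cmod (dd n)" using ddb[of n] elim R0
          by (meson less_imp_le mult_left_mono order_trans)
        have dpos: "0 < cmod (dd n)" using p le by linarith
        have "cmod (e n) / cmod (dd n) \<le> cmod (e n) / (R * (cmod \<mu>0 / 2))"
          by (rule divide_left_mono[OF le norm_ge_zero mult_pos_pos[OF dpos p]])
        then show ?case unfolding \<tau>_def norm_divide .
      qed
      show "(\<lambda>n. cmod (e n) / (R * (cmod \<mu>0 / 2))) \<longlonglongrightarrow> 0"
        by (rule tendsto_divide_zero[OF tendsto_norm_zero[OF et]])
    qed
    have ev: "\<forall>\<^sub>F n in sequentially. ee S C K (\<mu> n) + (Rc^2 + K^2 - K) * \<tau> n^2 - 2*Rc*\<mu> n*\<tau> n = 0 \<and> \<tau> n \<noteq> 0"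
      using ev1 ev2
    proof eventually_elim
      case (elim n)
      have ddn: "dd n \<noteq> 0"
      proof -
        have "0 < R * cmod (\<mu> n)" using R0 elim(2) \<mu>00
          by (metis mult_pos_pos norm_eq_zero zero_less_norm_iff order_less_trans half_gt_zero)
        then show ?thesis using ddb[of n] by auto
      qed
      have "e n * dd n^2 + C0 * e n^2 - 2*Rc*\<mu> n*e n * dd n = e n * (C0 * e n - Rc^2 * \<mu> n^2 + r' n^2)"
        unfolding dd_def by (simp add: power2_eq_square algebra_simps)
      also have "\<dots> = 0" using r'2[of n] by simp
      finally have z: "e n * dd n^2 + C0 * e n^2 - 2*Rc*\<mu> n*e n * dd n = 0" .
      have "e n + C0 * \<tau> n^2 - 2*Rc*\<mu> n*\<tau> n = (e n * dd n^2 + C0 * e n^2 - 2*Rc*\<mu> n*e n * dd n) / dd n^2"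
        unfolding \<tau>_def using ddn by (simp add: field_simps power2_eq_square)
      then have "e n + C0 * \<tau> n^2 - 2*Rc*\<mu> n*\<tau> n = 0" using z by simp
      moreover have "\<tau> n \<noteq> 0" unfolding \<tau>_def using ddn elim(1) e_def by simp
      ultimately show ?case unfolding e_def C0_def by simp
    qed
    show ?thesis using common[OF S0 SC \<mu>t \<tau>t e0 ev] unfolding S_def C_def K_def Rc_def .
  qed
qed



lemma F1h_eq: "F1h s c = (\<lambda>p. fst (snd p)^2 - (fst p * s - fst (snd p) * c)^2
      + 2 * fst (snd (snd p)) * snd (snd (snd p)) - snd (snd (snd p))^2)"
  by (rule ext) (simp add: F1h_def split: prod.split)

lemma F2h_eq: "F2h k R = (\<lambda>p. (fst p^2 - 2 * k * fst (snd (snd p)) * snd (snd (snd p))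
      + (R^2 + k^2) * snd (snd (snd p))^2)^2
      - 4 * R^2 * snd (snd (snd p))^2 * (fst p^2 + fst (snd p)^2))"
  by (rule ext) (simp add: F2h_def split: prod.split)

lemma F1h_pf: "F1h s c \<in> poly_fun4" unfolding F1h_eq by (intro pf_intros)
lemma F2h_pf: "F2h k R \<in> poly_fun4" unfolding F2h_eq by (intro pf_intros)

lemma cF1_cp: "cF1 S C \<in> cpoly4" unfolding cF1_def by (intro cp_intros)
lemma cF2_cp: "cF2 K R \<in> cpoly4" unfolding cF2_def by (intro cp_intros)

lemma cF1_real: "cF1 (of_real s) (of_real c) (cmap p) = of_real (F1h s c p)"
  unfolding cF1_def F1h_eq cmap_def by simp
lemma cF2_real: "cF2 (of_real k) (of_real R) (cmap p) = of_real (F2h k R p)"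
  unfolding cF2_def F2h_eq cmap_def by simp

lemma cF1_hom: "cF1 S C (a * x, a * y, a, a * w) = a^2 * cF1 S C (x, y, 1, w)"
  unfolding cF1_def by (simp add: power2_eq_square algebra_simps)
lemma cF2_hom: "cF2 K R (a * x, a * y, a, a * w) = a^4 * cF2 K R (x, y, 1, w)"
  unfolding cF2_def by (simp add: power2_eq_square power4_eq_xxxx algebra_simps)

lemma pinf_zero:
  fixes s c k R z0 :: real
  assumes s0: "s \<noteq> 0" and sc: "s^2 + c^2 = 1" and R0: "R > 0" and z0: "z0 \<noteq> 0"
    and H: "H \<in> saturation_W (ideal_gen2 (F1h s c) (F2h k R))"
  shows "H (0, 0, z0, 0) = 0"
proof -
  from H obtain n A B where Hp: "H \<in> poly_fun4" and Ap: "A \<in> poly_fun4" and Bp: "B \<in> poly_fun4"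
    and id: "(\<lambda>p. coordW p ^ n * H p) = (\<lambda>p. A p * F1h s c p + B p * F2h k R p)"
    unfolding saturation_W_def ideal_gen2_def by blast
  obtain gH where gH: "gH \<in> cpoly4" "\<forall>p. gH (cmap p) = of_real (H p)" using pf_ext[OF Hp] by blast
  obtain gA where gA: "gA \<in> cpoly4" "\<forall>p. gA (cmap p) = of_real (A p)" using pf_ext[OF Ap] by blast
  obtain gB where gB: "gB \<in> cpoly4" "\<forall>p. gB (cmap p) = of_real (B p)" using pf_ext[OF Bp] by blast
  define S C K Rc where "S = complex_of_real s" and "C = complex_of_real c" and "K = complex_of_real k"
    and "Rc = complex_of_real R"
  define D where "D = (\<lambda>z. snd (snd (snd z)) ^ n * gH z - (gA z * cF1 S C z + gB z * cF2 K Rc z))"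
  have Dp: "D \<in> cpoly4" unfolding D_def by (intro cp_intros gH(1) gA(1) gB(1) cF1_cp cF2_cp)
  have Dr: "D (cmap p) = 0" for p
  proof -
    have "coordW p ^ n * H p = A p * F1h s c p + B p * F2h k R p" using fun_cong[OF id, of p] by simp
    then have "complex_of_real (coordW p ^ n * H p - (A p * F1h s c p + B p * F2h k R p)) = 0" by simp
    moreover have "snd (snd (snd (cmap p))) = of_real (coordW p)" unfolding cmap_def coordW_def by simp
    ultimately show ?thesis unfolding D_def S_def C_def K_def Rc_def
      using gH(2)[rule_format, of p] gA(2)[rule_format, of p] gB(2)[rule_format, of p]
        cF1_real[of s c p] cF2_real[of k R p] by simp
  qed
  have D0: "D z = 0" for z by (rule cp_vanish[OF Dp]) (use Dr in blast)
  obtain X Y W where X: "X \<longlonglongrightarrow> 0" and Y: "Y \<longlonglongrightarrow> 0" and W: "W \<longlonglongrightarrow> 0"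
    and ev: "\<forall>\<^sub>F m in sequentially. cF1 S C (X m, Y m, 1, W m) = 0 \<and> cF2 K Rc (X m, Y m, 1, W m) = 0 \<and> W m \<noteq> 0"
    using curve_points[OF s0 sc R0, of k] unfolding S_def C_def K_def Rc_def by blast
  define a where "a = complex_of_real z0"
  have a0: "a \<noteq> 0" using z0 a_def by simp
  define Q where "Q m = (a * X m, a * Y m, a, a * W m)" for m
  have Qt: "Q \<longlonglongrightarrow> (0, 0, a, 0)" unfolding Q_def
    using tendsto_mult[OF tendsto_const X, of a] tendsto_mult[OF tendsto_const Y, of a]
      tendsto_mult[OF tendsto_const W, of a]
    by (intro tendsto_Pair) auto
  have ev2: "\<forall>\<^sub>F m in sequentially. gH (Q m) = 0" using ev
  proof eventually_elim
    case (elim m)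
    have "cF1 S C (Q m) = 0" "cF2 K Rc (Q m) = 0" unfolding Q_def cF1_hom cF2_hom using elim by simp_all
    moreover have "snd (snd (snd (Q m))) ^ n \<noteq> 0" unfolding Q_def using elim a0 by simp
    ultimately show ?case using D0[of "Q m"] unfolding D_def by (simp, blast)
  qed
  have "isCont gH (0, 0, a, 0)"
    using cp_cont[OF gH(1)] by (simp add: continuous_on_eq_continuous_at)
  then have t1: "(\<lambda>m. gH (Q m)) \<longlonglongrightarrow> gH (0, 0, a, 0)" by (rule isCont_tendsto_compose[OF _ Qt])
  have t2: "(\<lambda>m. gH (Q m)) \<longlonglongrightarrow> 0" using ev2 by (rule tendsto_eventually)
  have "gH (0, 0, a, 0) = 0" using LIMSEQ_unique[OF t1 t2] .
  moreover have "cmap (0, 0, z0, 0) = (0, 0, a, 0)" unfolding cmap_def a_def by simp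
  ultimately show ?thesis using gH(2) by (metis of_real_eq_0_iff)
qed



lemma bound_core:
  fixes x y w s c k R :: real
  assumes sc: "s^2 + c^2 = 1" and F: "y^2 - (x* s - y*c)^2 + 2*w - w^2 = 0"
    and w1: "\<bar>w\<bar> < 1" and N1: "x^2 + y^2 \<le> 1"
  shows "\<bar>F2h k R (x, y, 1, w) - (Eform k s c (x, y))^2\<bar>
     \<le> 4 * (2*\<bar>R^2+k^2-k\<bar>*(1+2*\<bar>k\<bar>) + 4*(R^2+k^2-k)^2 + 4*R^2) * (x^2+y^2)^3"
proof -
  define N where "N = x^2 + y^2"
  define Q where "Q = Qform s c (x, y)"
  define E where "E = Eform k s c (x, y)"
  define C0 where "C0 = R^2+k^2-k"
  have N0: "0 \<le> N" unfolding N_def by simp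
  have E_def': "E = x^2 - 2*k*Q" unfolding E_def Q_def Eform_def by simp
  have Q_def': "Q = (s^2*x^2 - 2* s*c*x*y - s^2*y^2)/2" unfolding Q_def Qform_def by simp
  have h1: "w * (2 - w) = 2 * Q"
  proof -
    have "(x * s - y*c)^2 - y^2 = s^2*x^2 - 2 * s*c*x*y - s^2*y^2 + (s^2 + c^2 - 1)*y^2"
      by (simp add: power2_eq_square algebra_simps)
    then have "(x * s - y*c)^2 - y^2 = s^2*x^2 - 2 * s*c*x*y - s^2*y^2" using sc by simp
    then show ?thesis using F unfolding Q_def' by (simp add: power2_eq_square algebra_simps)
  qed
  have s2: "s^2 \<le> 1" using sc by (smt (verit) zero_le_power2)
  have sc2: "2 * \<bar>s*c\<bar> \<le> 1"
  proof -
    have "0 \<le> (\<bar>s\<bar> - \<bar>c\<bar>)^2" by simp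
    then show ?thesis using sc by (simp add: power2_eq_square abs_mult algebra_simps)
  qed
  have xy: "2 * \<bar>x*y\<bar> \<le> N"
  proof -
    have "0 \<le> (\<bar>x\<bar> - \<bar>y\<bar>)^2" by simp
    then show ?thesis unfolding N_def by (simp add: power2_eq_square abs_mult algebra_simps)
  qed
  have hQ: "\<bar>Q\<bar> \<le> N"
  proof -
    have a: "\<bar>s^2*x^2 - s^2*y^2\<bar> \<le> N"
    proof -
      have "\<bar>s^2*x^2 - s^2*y^2\<bar> \<le> s^2*x^2 + s^2*y^2" by (simp add: abs_le_iff)
      also have "\<dots> = s^2 * N" unfolding N_def by (simp add: algebra_simps)
      also have "\<dots> \<le> 1 * N" by (rule mult_right_mono[OF s2 N0])
      finally show ?thesis by simp
    qed
    have b: "\<bar>2* s*c*x*y\<bar> \<le> N"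
    proof -
      have "\<bar>2* s*c*x*y\<bar> = (2*\<bar>s*c\<bar>) * \<bar>x*y\<bar>" by (simp add: abs_mult)
      also have "\<dots> \<le> 1 * \<bar>x*y\<bar>" by (rule mult_right_mono[OF sc2]) simp
      also have "\<dots> \<le> N" using xy by simp
      finally show ?thesis .
    qed
    have "\<bar>Q\<bar> = \<bar>(s^2*x^2 - s^2*y^2) - 2* s*c*x*y\<bar> / 2" unfolding Q_def' by (simp add: algebra_simps)
    also have "\<dots> \<le> (\<bar>s^2*x^2 - s^2*y^2\<bar> + \<bar>2* s*c*x*y\<bar>) / 2"
      by (intro divide_right_mono abs_triangle_ineq4) simp
    also have "\<dots> \<le> N" using a b by simp
    finally show ?thesis .
  qed
  have hw: "\<bar>w\<bar> \<le> 2 * N"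
  proof -
    have "\<bar>w\<bar> * 1 \<le> \<bar>w\<bar> * \<bar>2 - w\<bar>" using w1 by (intro mult_left_mono) auto
    also have "\<dots> = 2 * \<bar>Q\<bar>" using h1 by (metis abs_mult abs_numeral)
    finally show ?thesis using hQ by simp
  qed
  have hE: "\<bar>E\<bar> \<le> (1 + 2*\<bar>k\<bar>) * N"
  proof -
    have "\<bar>E\<bar> \<le> \<bar>x^2\<bar> + \<bar>2*k*Q\<bar>" unfolding E_def' by (rule abs_triangle_ineq4)
    also have "\<dots> = x^2 + 2*\<bar>k\<bar>*\<bar>Q\<bar>" by (simp add: abs_mult)
    also have "\<dots> \<le> N + 2*\<bar>k\<bar>*N" unfolding N_def using hQ N_def
      by (intro add_mono mult_left_mono) auto
    finally show ?thesis by (simp add: algebra_simps)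
  qed
  have inner: "x^2 - 2*k*1*w + (R^2+k^2)*w^2 = E + C0 * w^2"
  proof -
    have "2*k*w = k * (w * (2 - w)) + k * w^2" by (simp add: power2_eq_square algebra_simps)
    then have "2*k*w = 2*k*Q + k*w^2" using h1 by simp
    then show ?thesis unfolding E_def' C0_def by (simp add: algebra_simps)
  qed
  have id: "F2h k R (x, y, 1, w) - E^2 = w^2 * (2*C0*E + C0^2*w^2 - 4*R^2*N)"
  proof -
    have "F2h k R (x, y, 1, w) = (x^2 - 2*k*1*w + (R^2+k^2)*w^2)^2 - 4*R^2*w^2*N"
      unfolding F2h_def N_def by simp
    also have "\<dots> = (E + C0 * w^2)^2 - 4*R^2*w^2*N" unfolding inner ..
    finally show ?thesis by (simp add: power2_eq_square algebra_simps)
  qed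
  define Mb where "Mb = 2*\<bar>C0\<bar>*(1+2*\<bar>k\<bar>) + 4*C0^2 + 4*R^2"
  have w2: "w^2 \<le> 4 * N^2"
  proof -
    have "\<bar>w\<bar>^2 \<le> (2*N)^2" using hw by (intro power_mono) auto
    then show ?thesis by (simp add: power2_eq_square)
  qed
  have N1': "N \<le> 1" using N1 unfolding N_def .
  have NN: "N^2 \<le> N" unfolding power2_eq_square
    using mult_left_mono[OF N1' N0] by simp
  have br: "\<bar>2*C0*E + C0^2*w^2 - 4*R^2*N\<bar> \<le> Mb * N"
  proof -
    have t1: "\<bar>2*C0*E\<bar> \<le> 2*\<bar>C0\<bar>*(1+2*\<bar>k\<bar>) * N"
      using mult_left_mono[OF hE, of "2*\<bar>C0\<bar>"] by (simp add: abs_mult algebra_simps)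
    have t2: "\<bar>C0^2*w^2\<bar> \<le> 4*C0^2 * N"
    proof -
      have "\<bar>C0^2*w^2\<bar> = C0^2*w^2" by simp
      also have "\<dots> \<le> C0^2 * (4*N^2)" by (rule mult_left_mono[OF w2]) simp
      also have "\<dots> \<le> C0^2 * (4*N)" using NN by (intro mult_left_mono) auto
      finally show ?thesis by simp
    qed
    have t3: "\<bar>4*R^2*N\<bar> = 4*R^2*N" using N0 by simp
    have "\<bar>2*C0*E + C0^2*w^2 - 4*R^2*N\<bar> \<le> \<bar>2*C0*E\<bar> + \<bar>C0^2*w^2\<bar> + \<bar>4*R^2*N\<bar>" by linarith
    then show ?thesis using t1 t2 t3 unfolding Mb_def by (simp add: algebra_simps)
  qed
  have Mb0: "0 \<le> Mb" unfolding Mb_def by simp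
  have "\<bar>F2h k R (x, y, 1, w) - E^2\<bar> = w^2 * \<bar>2*C0*E + C0^2*w^2 - 4*R^2*N\<bar>"
    unfolding id by (simp add: abs_mult)
  also have "\<dots> \<le> (4*N^2) * (Mb * N)" by (intro mult_mono w2 br) (use Mb0 N0 in auto)
  also have "\<dots> = 4 * Mb * N^3" by (simp add: power2_eq_square power3_eq_cube)
  finally show ?thesis unfolding E_def Mb_def C0_def N_def .
qed



lemma obound:
  fixes \<omega> :: "real \<times> real \<Rightarrow> real" and s c k R :: real
  assumes sc: "s^2 + c^2 = 1" and \<omega>0: "\<omega> (0,0) = 0" and cont: "continuous (at (0,0)) \<omega>"
    and ev: "\<forall>\<^sub>F v in nhds (0,0). F1h s c (fst v, snd v, 1, \<omega> v) = 0"
  shows "(\<lambda>v. F2h k R (fst v, snd v, 1, \<omega> v) - (Eform k s c v)^2) \<in> O[at (0,0)](\<lambda>v. norm v ^ 5)"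
proof -
  define M where "M = 4 * (2*\<bar>R^2+k^2-k\<bar>*(1+2*\<bar>k\<bar>) + 4*(R^2+k^2-k)^2 + 4*R^2)"
  have M0: "0 \<le> M" unfolding M_def by simp
  have e1: "\<forall>\<^sub>F v in at (0,0). F1h s c (fst v, snd v, 1, \<omega> v) = 0"
    unfolding eventually_at_filter by (rule eventually_mono[OF ev]) simp
  have "(\<omega> \<longlongrightarrow> 0) (at (0,0))" using cont \<omega>0 by (simp add: continuous_at)
  then have e2: "\<forall>\<^sub>F v in at (0,0). dist (\<omega> v) 0 < 1" by (rule tendstoD) simp
  have e3: "\<forall>\<^sub>F v in at (0,0). dist v (0,0) < 1" by (rule tendstoD[OF tendsto_ident_at]) simp
  show ?thesis
  proof (rule bigoI[where c = M])
    show "\<forall>\<^sub>F v in at (0,0). norm (F2h k R (fst v, snd v, 1, \<omega> v) - (Eform k s c v)^2) \<le> M * norm (norm v ^ 5)"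
      using e1 e2 e3
    proof eventually_elim
      case (elim v)
      obtain x y where v: "v = (x, y)" by (cases v) auto
      have nv: "norm v = sqrt (x^2 + y^2)" unfolding v by (simp add: norm_Pair)
      have nv2: "norm v ^ 2 = x^2 + y^2" unfolding nv by simp
      have nv1: "norm v < 1" using elim(3) unfolding v by (simp add: dist_norm zero_prod_def[symmetric])
      have N1: "x^2 + y^2 \<le> 1" using nv1 nv2
        by (metis less_imp_le norm_ge_zero power_le_one)
      have F: "y^2 - (x * s - y*c)^2 + 2 * \<omega> v - (\<omega> v)^2 = 0"
        using elim(1) unfolding v F1h_def by simp
      have w1: "\<bar>\<omega> v\<bar> < 1" using elim(2) by simp
      have b: "\<bar>F2h k R (x, y, 1, \<omega> v) - (Eform k s c (x, y))^2\<bar> \<le> M * (x^2+y^2)^3"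
        using bound_core[OF sc F w1 N1, of k R] unfolding M_def .
      have "(x^2+y^2)^3 = norm v ^ 6" unfolding nv2[symmetric] by (simp add: power_mult[symmetric])
      also have "\<dots> = norm v ^ 5 * norm v" by (simp add: eval_nat_numeral)
      finally have "M * (x^2+y^2)^3 = M * (norm v ^ 5 * norm v)" by simp
      also have "\<dots> \<le> M * (norm v ^ 5 * 1)"
        using nv1 M0 by (intro mult_left_mono) auto
      finally show ?case using b unfolding v by simp
    qed
  qed
qed

lemma sat_F1: "F1h s c \<in> saturation_W (ideal_gen2 (F1h s c) (F2h k R))"
proof -
  have "\<exists>A B. (\<lambda>p. coordW p ^ 0 * F1h s c p) = (\<lambda>p. A p * F1h s c p + B p * F2h k R p) \<and> A \<in> poly_fun4 \<and> B \<in> poly_fun4"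
    by (intro exI[of _ "\<lambda>p. 1"] exI[of _ "\<lambda>p. 0"]) (simp add: poly_fun4.pconst)
  then have "(\<lambda>p. coordW p ^ 0 * F1h s c p) \<in> ideal_gen2 (F1h s c) (F2h k R)"
    unfolding ideal_gen2_def by blast
  then show ?thesis unfolding saturation_W_def using F1h_pf by blast
qed

lemma sat_F2: "F2h k R \<in> saturation_W (ideal_gen2 (F1h s c) (F2h k R))"
proof -
  have "\<exists>A B. (\<lambda>p. coordW p ^ 0 * F2h k R p) = (\<lambda>p. A p * F1h s c p + B p * F2h k R p) \<and> A \<in> poly_fun4 \<and> B \<in> poly_fun4"
    by (intro exI[of _ "\<lambda>p. 0"] exI[of _ "\<lambda>p. 1"]) (simp add: poly_fun4.pconst)
  then have "(\<lambda>p. coordW p ^ 0 * F2h k R p) \<in> ideal_gen2 (F1h s c) (F2h k R)"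
    unfolding ideal_gen2_def by blast
  then show ?thesis unfolding saturation_W_def using F2h_pf by blast
qed

lemma infinity_set:
  fixes s c k R :: real
  assumes s0: "s \<noteq> 0" and sc: "s^2 + c^2 = 1" and R0: "R > 0"
  shows "{p \<in> proj_closure k R s c. coordW p = 0} = {(0, 0, z, 0) | z. z \<noteq> 0}"
proof
  show "{p \<in> proj_closure k R s c. coordW p = 0} \<subseteq> {(0, 0, z, 0) | z. z \<noteq> 0}"
  proof
    fix p assume p: "p \<in> {p \<in> proj_closure k R s c. coordW p = 0}"
    obtain X Y Z W where pe: "p = (X, Y, Z, W)" by (cases p) auto
    have W: "W = 0" using p pe coordW_def by simp
    have nz: "p \<noteq> (0,0,0,0)" and z1: "F1h s c p = 0" and z2: "F2h k R p = 0"
      using p sat_F1[of s c k R] sat_F2[of k R s c] unfolding proj_closure_def proj_zero_set_def by auto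
    have "X^4 = 0" using z2 unfolding pe W F2h_def by (simp add: power2_eq_square power4_eq_xxxx)
    then have X: "X = 0" by simp
    have "Y^2 * (1 - c^2) = 0" using z1 unfolding pe W X F1h_def by (simp add: power2_eq_square algebra_simps)
    moreover have cs: "1 - c^2 = s^2" using sc by simp
    ultimately have "Y^2 * s^2 = 0" by (simp only: cs)
    then have Y: "Y = 0" using s0 by simp
    have "Z \<noteq> 0" using nz pe X Y W by simp
    then show "p \<in> {(0, 0, z, 0) | z. z \<noteq> 0}" using pe X Y W by simp
  qed
  show "{(0, 0, z, 0) | z. z \<noteq> 0} \<subseteq> {p \<in> proj_closure k R s c. coordW p = 0}"
  proof
    fix p :: pt4 assume "p \<in> {(0, 0, z, 0) | z. z \<noteq> 0}"
    then obtain z where pe: "p = (0, 0, z, 0)" and z: "z \<noteq> 0" by blast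
    have "\<forall>H\<in>saturation_W (ideal_gen2 (F1h s c) (F2h k R)). H p = 0"
      using pinf_zero[OF s0 sc R0 z] pe by blast
    then show "p \<in> {p \<in> proj_closure k R s c. coordW p = 0}"
      unfolding proj_closure_def proj_zero_set_def using pe z coordW_def by simp
  qed
qed



lemma Eform_coef: "Eform k s c (x, y) = (1 - k * s^2)*x^2 + (2*k * s * c)*x*y + (k * s^2)*y^2"
  unfolding Eform_def Qform_def by (simp add: field_simps power2_eq_square)

lemma quad_disc_coef:
  assumes "\<forall>x y. q (x, y) = a*x^2 + b*x*y + d*y^2"
  shows "quad_disc q = b^2 - 4*a*d"
  unfolding quad_disc_def Let_def using assms by simp

lemma fdl_iff:
  fixes a b d :: real
  assumes hq: "\<forall>x y. q (x, y) = a*x^2 + b*x*y + d*y^2"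
  shows "factors_distinct_linear q \<longleftrightarrow> b^2 - 4*a*d \<noteq> 0"
proof
  assume "factors_distinct_linear q"
  then obtain \<alpha> \<beta> \<gamma> \<delta> :: complex where
    f: "\<forall>x y. complex_of_real (q (x,y)) = (\<alpha> * of_real x + \<beta> * of_real y) * (\<gamma> * of_real x + \<delta> * of_real y)"
    and det: "\<alpha> * \<delta> - \<beta> * \<gamma> \<noteq> 0"
    unfolding factors_distinct_linear_def by blast
  have a: "of_real a = \<alpha> * \<gamma>" using f[rule_format, of 1 0] hq by simp
  have d: "of_real d = \<beta> * \<delta>" using f[rule_format, of 0 1] hq by simp
  have "of_real (a + b + d) = (\<alpha> + \<beta>) * (\<gamma> + \<delta>)" using f[rule_format, of 1 1] hq by simp
  then have b: "of_real b = \<alpha> * \<delta> + \<beta> * \<gamma>" using a d by (simp add: algebra_simps)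
  have "complex_of_real (b^2 - 4*a*d) = (\<alpha> * \<delta> - \<beta> * \<gamma>)^2"
    using a b d by (simp add: power2_eq_square algebra_simps)
  then show "b^2 - 4*a*d \<noteq> 0" using det by (metis of_real_0 power_zero_numeral zero_eq_power2)
next
  assume D: "b^2 - 4*a*d \<noteq> 0"
  show "factors_distinct_linear q"
  proof (cases "a = 0")
    case True
    then have b0: "b \<noteq> 0" using D by simp
    show ?thesis unfolding factors_distinct_linear_def
      by (rule exI[of _ 0], rule exI[of _ 1], rule exI[of _ "of_real b"], rule exI[of _ "of_real d"])
        (use hq True b0 in \<open>simp add: power2_eq_square algebra_simps\<close>)
  next
    case False
    define r where "r = csqrt (complex_of_real (b^2 - 4*a*d))"
    have r2: "r^2 = of_real (b^2 - 4*a*d)" unfolding r_def by simp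
    have r0: "r \<noteq> 0" by (metis r2 D of_real_eq_0_iff power_zero_numeral)
    define A where "A = complex_of_real a"
    define Bc where "Bc = complex_of_real b"
    define Dc where "Dc = complex_of_real d"
    have A0: "A \<noteq> 0" using False A_def by simp
    have r2': "r^2 = Bc^2 - 4*A*Dc" unfolding r2 A_def Bc_def Dc_def by simp
    define r1 where "r1 = (- Bc + r) / (2*A)"
    define r2x where "r2x = (- Bc - r) / (2*A)"
    have sum: "A * (r1 + r2x) = - Bc" unfolding r1_def r2x_def using A0 by (simp add: field_simps)
    have prod: "A * (r1 * r2x) = Dc"
    proof -
      have "A * (r1 * r2x) = (Bc^2 - r^2) / (4*A)" unfolding r1_def r2x_def using A0
        by (simp add: field_simps power2_eq_square)
      also have "\<dots> = Dc" unfolding r2' using A0 by (simp add: field_simps)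
      finally show ?thesis .
    qed
    show ?thesis unfolding factors_distinct_linear_def
    proof (intro exI conjI allI)
      fix x y :: real
      have "(A * of_real x + (- A * r1) * of_real y) * (1 * of_real x + (- r2x) * of_real y)
          = A * of_real x ^2 - A * (r1 + r2x) * of_real x * of_real y + A * (r1 * r2x) * of_real y^2"
        by (simp add: power2_eq_square algebra_simps)
      also have "\<dots> = complex_of_real (q (x,y))" unfolding sum prod using hq
        by (simp add: A_def Bc_def Dc_def)
      finally show "complex_of_real (q (x,y)) = (A * of_real x + (- A * r1) * of_real y) * (1 * of_real x + (- r2x) * of_real y)" by simp
      have "A * (- r2x) - (- A * r1) * 1 = A * (r1 - r2x)" by (simp add: algebra_simps)
      also have "\<dots> = r" unfolding r1_def r2x_def using A0 by (simp add: field_simps)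
      finally show "A * (- r2x) - (- A * r1) * 1 \<noteq> 0" using r0 by simp
    qed
  qed
qed

theorem theorem4:
  fixes k R t c s :: real and \<omega> :: "real \<times> real \<Rightarrow> real"
  assumes "R > 0" and "t \<noteq> 0"
    and "c = (1 - t^2) / (1 + t^2)" and "s = 2 * t / (1 + t^2)"
    and "\<omega> (0,0) = 0" and "continuous (at (0,0)) \<omega>"
    and "\<forall>\<^sub>F v in nhds (0,0). F1h s c (fst v, snd v, 1, \<omega> v) = 0"
  shows "{p \<in> proj_closure k R s c. coordW p = 0} = {(0, 0, z, 0) | z. z \<noteq> 0}
    \<and> (\<lambda>v. F2h k R (fst v, snd v, 1, \<omega> v) - (Eform k s c v)^2) \<in> O[at (0,0)](\<lambda>v. norm v ^ 5)
    \<and> Eform k s c \<noteq> (\<lambda>_. 0)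
    \<and> quad_disc (Eform k s c) = 4 * k * s^2 * (k - 1)
    \<and> (\<not> factors_distinct_linear (Eform k s c) \<longleftrightarrow> quad_disc (Eform k s c) = 0)
    \<and> (quad_disc (Eform k s c) = 0 \<longleftrightarrow> k = 0 \<or> k = 1)"
proof -
  have t2: "1 + t^2 \<noteq> 0" by (metis add_nonneg_eq_0_iff zero_le_one zero_le_power2 one_neq_zero)
  have sc: "s^2 + c^2 = 1"
  proof -
    have "s^2 + c^2 = ((2*t)^2 + (1 - t^2)^2) / (1 + t^2)^2"
      unfolding assms(3,4) by (simp add: power_divide add_divide_distrib)
    also have "(2*t)^2 + (1 - t^2)^2 = (1 + t^2)^2" by (simp add: power2_eq_square algebra_simps)
    finally show ?thesis using t2 by simp
  qed
  have s0: "s \<noteq> 0" unfolding assms(4) using assms(2) t2 by simp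
  have hq: "\<forall>x y. Eform k s c (x, y) = (1 - k * s^2)*x^2 + (2*k * s * c)*x*y + (k * s^2)*y^2"
    using Eform_coef by blast
  have qd: "quad_disc (Eform k s c) = 4 * k * s^2 * (k - 1)"
  proof -
    have "quad_disc (Eform k s c) = (2*k * s * c)^2 - 4*(1 - k * s^2)*(k * s^2)"
      by (rule quad_disc_coef[OF hq])
    also have "\<dots> = 4*k^2 * s^2*(s^2 + c^2) - 4 * k * s^2" by (simp add: power2_eq_square algebra_simps)
    also have "\<dots> = 4 * k * s^2 * (k - 1)" unfolding sc by (simp add: power2_eq_square algebra_simps)
    finally show ?thesis .
  qed
  have nz: "Eform k s c \<noteq> (\<lambda>_. 0)"
  proof
    assume "Eform k s c = (\<lambda>_. 0)"
    then have "Eform k s c (1,0) = 0" "Eform k s c (0,1) = 0" by simp_all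
    then show False using hq by simp
  qed
  have fd: "(\<not> factors_distinct_linear (Eform k s c) \<longleftrightarrow> quad_disc (Eform k s c) = 0)"
    using fdl_iff[OF hq] quad_disc_coef[OF hq] by simp
  have last: "(quad_disc (Eform k s c) = 0 \<longleftrightarrow> k = 0 \<or> k = 1)" unfolding qd using s0 by simp
  show ?thesis
    using infinity_set[OF s0 sc assms(1), of k] obound[OF sc assms(5,6,7), of k R] nz qd fd last
    by blast
qed

end
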